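(* Let $R$ be a commutative ring of Krull dimension zero. Then every faithful $R$-module $M$ satisfies the dual of proper strong Property $\mathcal{A}$. In particular, every $R$-module $M$ satisfies the dual of proper strong Property $\mathcal{A}$ as an $R/\mathrm{Ann}_R(M)$-module.
   Context: All rings are commutative with identity. For an $R$-module $M$, $W_R(M)=\{r\in R : rM\neq M\}$. $M$ satisfies the dual of proper strong Property $\mathcal{A}$ if for every proper finitely generated ideal $I=\langle a_1,\dots,a_n\rangle$ of $R$ with $a_i\in W_R(M)$ for all $i$, we have $IM\neq M$. *)

theory Defs
  imports "HOL-Algebra.Module" "HOL-Algebra.QuotRing"
begin

definition krull_dim_zero :: "('a, 'c) ring_scheme \<Rightarrow> bool" where
  "krull_dim_zero R \<longleftrightarrow> \<one>\<^bsub>R\<^esub> \<noteq> \<zero>\<^bsub>R\<^esub> \<and> (\<forall>P. primeideal P R \<longrightarrow> maximalideal P R)"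

definition W_mod :: "('a, 'c) ring_scheme \<Rightarrow> ('a, 'b, 'd) module_scheme \<Rightarrow> 'a set" where
  "W_mod R M = {r \<in> carrier R. (\<lambda>m. r \<odot>\<^bsub>M\<^esub> m) ` carrier M \<noteq> carrier M}"

definition ideal_smult :: "('a, 'c) ring_scheme \<Rightarrow> ('a, 'b, 'd) module_scheme \<Rightarrow> 'a set \<Rightarrow> 'b set" where
  "ideal_smult R M I = \<Inter>{N. submodule N R M \<and> (\<forall>a\<in>I. \<forall>m\<in>carrier M. a \<odot>\<^bsub>M\<^esub> m \<in> N)}"

text \<open>Dual of proper strong Property A.  A finitely generated ideal with generators
  a_1,...,a_n (n >= 1) in W_R(M) is the ideal generated by a finite nonempty subset of W_R(M).\<close>
definition dual_proper_strong_A :: "('a, 'c) ring_scheme \<Rightarrow> ('a, 'b, 'd) module_scheme \<Rightarrow> bool" where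
  "dual_proper_strong_A R M \<longleftrightarrow>
     (\<forall>S. finite S \<and> S \<noteq> {} \<and> S \<subseteq> W_mod R M \<and> genideal R S \<noteq> carrier R
          \<longrightarrow> ideal_smult R M (genideal R S) \<noteq> carrier M)"

definition faithful_mod :: "('a, 'c) ring_scheme \<Rightarrow> ('a, 'b, 'd) module_scheme \<Rightarrow> bool" where
  "faithful_mod R M \<longleftrightarrow> (\<forall>r\<in>carrier R. (\<forall>m\<in>carrier M. r \<odot>\<^bsub>M\<^esub> m = \<zero>\<^bsub>M\<^esub>) \<longrightarrow> r = \<zero>\<^bsub>R\<^esub>)"

definition ann_mod :: "('a, 'c) ring_scheme \<Rightarrow> ('a, 'b, 'd) module_scheme \<Rightarrow> 'a set" where
  "ann_mod R M = {r \<in> carrier R. \<forall>m\<in>carrier M. r \<odot>\<^bsub>M\<^esub> m = \<zero>\<^bsub>M\<^esub>}"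

text \<open>M viewed as an R/Ann_R(M)-module: a coset acts through any of its representatives.\<close>
definition quot_ann_module :: "('a, 'c) ring_scheme \<Rightarrow> ('a, 'b, 'd) module_scheme \<Rightarrow> ('a set, 'b) module" where
  "quot_ann_module R M =
    \<lparr>carrier = carrier M, monoid.mult = monoid.mult M, one = \<one>\<^bsub>M\<^esub>,
     zero = \<zero>\<^bsub>M\<^esub>, add = add M,
     smult = (\<lambda>c m. (SOME r. r \<in> c) \<odot>\<^bsub>M\<^esub> m)\<rparr>"

end

theory Submission
  imports Defs
begin



lemma (in module) submodule_zero: "submodule N R M \<Longrightarrow> \<zero>\<^bsub>M\<^esub> \<in> N"
  using subgroup.one_closed[OF submodule.axioms(1)] by fastforce

lemma (in module) ideal_smult_submodule: "A \<subseteq> carrier R \<Longrightarrow> submodule (ideal_smult R M A) R M"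
proof -
  assume that: "A \<subseteq> carrier R"
  let ?S = "{N. submodule N R M \<and> (\<forall>a\<in>A. \<forall>m\<in>carrier M. a \<odot>\<^bsub>M\<^esub> m \<in> N)}"
  have ne: "carrier M \<in> ?S" using carrier_is_submodule that by auto
  show ?thesis unfolding ideal_smult_def
  proof (rule submoduleI)
    show "\<Inter>?S \<subseteq> carrier M" using ne by auto
    show "\<zero>\<^bsub>M\<^esub> \<in> \<Inter>?S" using submodule_zero by auto
    show "\<ominus>\<^bsub>M\<^esub> a \<in> \<Inter>?S" if "a \<in> \<Inter>?S" for a using that submoduleE(3) by blast
    show "a \<oplus>\<^bsub>M\<^esub> b \<in> \<Inter>?S" if "a \<in> \<Inter>?S" "b \<in> \<Inter>?S" for a b using that submoduleE(5) by blast
    show "a \<odot>\<^bsub>M\<^esub> x \<in> \<Inter>?S" if "a \<in> carrier R" "x \<in> \<Inter>?S" for a x using that submoduleE(4) by blast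
  qed
qed

lemma (in module) ideal_smult_gen: "a \<in> A \<Longrightarrow> m \<in> carrier M \<Longrightarrow> a \<odot>\<^bsub>M\<^esub> m \<in> ideal_smult R M A"
  unfolding ideal_smult_def by auto

lemma (in module) ideal_smult_min:
  "submodule N R M \<Longrightarrow> (\<And>a m. a \<in> A \<Longrightarrow> m \<in> carrier M \<Longrightarrow> a \<odot>\<^bsub>M\<^esub> m \<in> N) \<Longrightarrow> ideal_smult R M A \<subseteq> N"
  unfolding ideal_smult_def by auto

lemma (in module) ideal_smult_sub: "A \<subseteq> carrier R \<Longrightarrow> ideal_smult R M A \<subseteq> carrier M"
  using submoduleE(1)[OF ideal_smult_submodule] .

lemma (in module) ideal_smult_empty: "ideal_smult R M {} \<subseteq> {\<zero>\<^bsub>M\<^esub>}"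
proof (rule ideal_smult_min)
  show "submodule {\<zero>\<^bsub>M\<^esub>} R M" by (rule submoduleI) auto
qed auto

lemma (in module) submodule_preimage:
  assumes "c \<in> carrier R" "submodule N R M"
  shows "submodule {z \<in> carrier M. c \<odot>\<^bsub>M\<^esub> z \<in> N} R M"
proof (rule submoduleI)
  show "\<zero>\<^bsub>M\<^esub> \<in> {z \<in> carrier M. c \<odot>\<^bsub>M\<^esub> z \<in> N}" using assms submodule_zero by auto
  show "\<ominus>\<^bsub>M\<^esub> a \<in> {z \<in> carrier M. c \<odot>\<^bsub>M\<^esub> z \<in> N}" if "a \<in> {z \<in> carrier M. c \<odot>\<^bsub>M\<^esub> z \<in> N}" for a
    using that assms submoduleE(3)[OF assms(2)] by (auto simp: smult_r_minus)
  show "a \<oplus>\<^bsub>M\<^esub> b \<in> {z \<in> carrier M. c \<odot>\<^bsub>M\<^esub> z \<in> N}" if "a \<in> {z \<in> carrier M. c \<odot>\<^bsub>M\<^esub> z \<in> N}" "b \<in> {z \<in> carrier M. c \<odot>\<^bsub>M\<^esub> z \<in> N}" for a b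
    using that assms submoduleE(5)[OF assms(2)] by (auto simp: smult_r_distr)
  show "a \<odot>\<^bsub>M\<^esub> x \<in> {z \<in> carrier M. c \<odot>\<^bsub>M\<^esub> z \<in> N}" if "a \<in> carrier R" "x \<in> {z \<in> carrier M. c \<odot>\<^bsub>M\<^esub> z \<in> N}" for a x
  proof -
    have "c \<odot>\<^bsub>M\<^esub> (a \<odot>\<^bsub>M\<^esub> x) = a \<odot>\<^bsub>M\<^esub> (c \<odot>\<^bsub>M\<^esub> x)"
      using that assms by (simp add: smult_assoc1[symmetric] m_comm)
    thus ?thesis using that assms submoduleE(4)[OF assms(2)] by auto
  qed
qed auto




lemma (in cring) finprod_idem:
  assumes "finite T" "f \<in> T \<rightarrow> carrier R" "\<And>a. a \<in> T \<Longrightarrow> f a \<otimes> f a = f a"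
  shows "finprod R f T \<otimes> finprod R f T = finprod R f T"
  using assms
proof (induction T rule: finite_induct)
  case empty then show ?case by simp
next
  case (insert x F)
  have fx: "f x \<in> carrier R" and fF: "f \<in> F \<rightarrow> carrier R" using insert by auto
  have g: "finprod R f F \<in> carrier R" using fF by simp
  have "finprod R f (insert x F) = f x \<otimes> finprod R f F" using insert fF fx by (simp add: finprod_insert)
  moreover have "(f x \<otimes> finprod R f F) \<otimes> (f x \<otimes> finprod R f F) = (f x \<otimes> f x) \<otimes> (finprod R f F \<otimes> finprod R f F)"
    using fx g by (simp add: m_ac)
  ultimately show ?case using insert fF by simp
qed

lemma (in module) step_lemma:
  assumes H: "H \<subseteq> carrier R" and a: "a \<in> carrier R" and c: "c \<in> carrier R" and g: "g \<in> carrier R"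
    and gidem: "g \<otimes> g = g"
    and hyp: "\<And>y. y \<in> carrier M \<Longrightarrow> g \<odot>\<^bsub>M\<^esub> y \<in> ideal_smult R M (insert a H)"
    and IH: "\<And>y. y \<in> carrier M \<Longrightarrow> (c \<otimes> a \<otimes> g) \<odot>\<^bsub>M\<^esub> y \<in> ideal_smult R M H"
    and y: "y \<in> carrier M"
  shows "(c \<otimes> g) \<odot>\<^bsub>M\<^esub> y \<in> ideal_smult R M H"
proof -
  have cg: "c \<otimes> g \<in> carrier R" using c g by simp
  let ?Z = "{z \<in> carrier M. (c \<otimes> g) \<odot>\<^bsub>M\<^esub> z \<in> ideal_smult R M H}"
  have subZ: "submodule ?Z R M" by (rule submodule_preimage[OF cg ideal_smult_submodule[OF H]])
  have incl: "ideal_smult R M (insert a H) \<subseteq> ?Z"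
  proof (rule ideal_smult_min[OF subZ])
    fix x m assume x: "x \<in> insert a H" and m: "m \<in> carrier M"
    have xc: "x \<in> carrier R" using x H a by auto
    have eq: "(c \<otimes> g) \<odot>\<^bsub>M\<^esub> (x \<odot>\<^bsub>M\<^esub> m) = (c \<otimes> g \<otimes> x) \<odot>\<^bsub>M\<^esub> m" using cg xc m by (simp add: smult_assoc1)
    show "x \<odot>\<^bsub>M\<^esub> m \<in> ?Z"
    proof (cases "x = a")
      case True
      have "c \<otimes> g \<otimes> x = c \<otimes> a \<otimes> g" using True a c g by (simp add: m_ac)
      then show ?thesis using IH[OF m] eq xc m by simp
    next
      case False
      then have xH: "x \<in> H" using x by simp
      have "c \<otimes> g \<otimes> x = x \<otimes> (c \<otimes> g)" using xc cg by (simp add: m_comm)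
      then have "(c \<otimes> g) \<odot>\<^bsub>M\<^esub> (x \<odot>\<^bsub>M\<^esub> m) = x \<odot>\<^bsub>M\<^esub> ((c \<otimes> g) \<odot>\<^bsub>M\<^esub> m)"
        using eq xc cg m by (simp add: smult_assoc1)
      moreover have "x \<odot>\<^bsub>M\<^esub> ((c \<otimes> g) \<odot>\<^bsub>M\<^esub> m) \<in> ideal_smult R M H"
        using ideal_smult_gen[OF xH] cg m by simp
      ultimately show ?thesis using xc m by simp
    qed
  qed
  have "g \<odot>\<^bsub>M\<^esub> y \<in> ?Z" using incl hyp[OF y] by blast
  then have "(c \<otimes> g) \<odot>\<^bsub>M\<^esub> (g \<odot>\<^bsub>M\<^esub> y) \<in> ideal_smult R M H" by simp
  moreover have "(c \<otimes> g) \<odot>\<^bsub>M\<^esub> (g \<odot>\<^bsub>M\<^esub> y) = (c \<otimes> g) \<odot>\<^bsub>M\<^esub> y"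
    using cg g y c gidem by (simp add: smult_assoc1[symmetric] m_assoc)
  ultimately show ?thesis by simp
qed




lemma (in module) iter_lemma:
  assumes H: "H \<subseteq> carrier R" and a: "a \<in> carrier R" and u: "u \<in> carrier R" and g: "g \<in> carrier R"
    and gidem: "g \<otimes> g = g"
    and hyp: "\<And>y. y \<in> carrier M \<Longrightarrow> g \<odot>\<^bsub>M\<^esub> y \<in> ideal_smult R M (insert a H)"
    and nil: "u \<otimes> a [^] (p::nat) = \<zero>"
    and y: "y \<in> carrier M"
  shows "(u \<otimes> g) \<odot>\<^bsub>M\<^esub> y \<in> ideal_smult R M H"
proof -
  have "\<forall>y\<in>carrier M. (u \<otimes> a [^] (p - d) \<otimes> g) \<odot>\<^bsub>M\<^esub> y \<in> ideal_smult R M H" for d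
  proof (induction d)
    case 0
    show ?case using nil g submodule_zero[OF ideal_smult_submodule[OF H]] by simp
  next
    case (Suc d)
    show ?case
    proof (cases "p \<le> d")
      case True
      then have "p - Suc d = p - d" by simp
      then show ?thesis using Suc by simp
    next
      case False
      then have pe: "p - d = Suc (p - Suc d)" by simp
      let ?c = "u \<otimes> a [^] (p - Suc d)"
      have c: "?c \<in> carrier R" using u a by simp
      have "?c \<otimes> a = u \<otimes> a [^] (p - d)" using u a pe by (simp add: m_assoc)
      then have IH: "\<And>y. y \<in> carrier M \<Longrightarrow> (?c \<otimes> a \<otimes> g) \<odot>\<^bsub>M\<^esub> y \<in> ideal_smult R M H"
        using Suc by simp
      show ?thesis using step_lemma[OF H a c g gidem hyp IH] by blast
    qed
  qed
  from this[of p] y u show ?thesis by simp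
qed

lemma (in module) main_module:
  assumes G: "finite G" "G \<subseteq> carrier R" and full: "ideal_smult R M G = carrier M"
    and f: "\<And>a. a \<in> G \<Longrightarrow> f a \<in> carrier R" "\<And>a. a \<in> G \<Longrightarrow> f a \<otimes> f a = f a"
    and nil: "\<And>a. a \<in> G \<Longrightarrow> (\<one> \<ominus> f a) \<otimes> a [^] (p a :: nat) = \<zero>"
    and m: "m \<in> carrier M"
  shows "finprod R (\<lambda>a. \<one> \<ominus> f a) G \<odot>\<^bsub>M\<^esub> m = \<zero>\<^bsub>M\<^esub>"
proof -
  let ?u = "\<lambda>a. \<one> \<ominus> f a"
  have uc: "\<And>a. a \<in> G \<Longrightarrow> ?u a \<in> carrier R" using f by simp
  have uidem: "?u a \<otimes> ?u a = ?u a" if "a \<in> G" for a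
  proof -
    have "?u a \<otimes> ?u a = \<one> \<ominus> f a \<ominus> f a \<oplus> f a \<otimes> f a" using f(1)[OF that] by algebra
    also have "\<dots> = ?u a" using f[OF that] by algebra
    finally show ?thesis .
  qed
  have "T \<subseteq> G \<longrightarrow> (\<forall>y\<in>carrier M. finprod R ?u T \<odot>\<^bsub>M\<^esub> y \<in> ideal_smult R M (G - T))" for T
  proof (induction T rule: infinite_finite_induct)
    case (infinite A)
    then show ?case using G finite_subset by blast
  next
    case empty
    then show ?case using full by simp
  next
    case (insert a T)
    show ?case
    proof
      assume sub: "insert a T \<subseteq> G"
      let ?g = "finprod R ?u T"
      have uT: "?u \<in> T \<rightarrow> carrier R" using uc sub by auto
      have g: "?g \<in> carrier R" using uT by simp
      have gidem: "?g \<otimes> ?g = ?g" using finprod_idem[OF insert(1) uT] uidem sub by auto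
      have ins: "insert a (G - insert a T) = G - T" using sub insert(2) by auto
      have hyp: "\<And>y. y \<in> carrier M \<Longrightarrow> ?g \<odot>\<^bsub>M\<^esub> y \<in> ideal_smult R M (insert a (G - insert a T))"
        using insert(3) sub ins by auto
      have eq: "finprod R ?u (insert a T) = ?u a \<otimes> ?g"
        using finprod_insert[OF insert(1) insert(2)] uT uc sub by auto
      show "\<forall>y\<in>carrier M. finprod R ?u (insert a T) \<odot>\<^bsub>M\<^esub> y \<in> ideal_smult R M (G - insert a T)"
        using iter_lemma[of "G - insert a T" a "?u a" ?g, OF _ _ _ g gidem hyp nil] sub uc eq G(2) by auto
    qed
  qed
  from this[of G] m have "finprod R ?u G \<odot>\<^bsub>M\<^esub> m \<in> ideal_smult R M {}" by simp
  then show ?thesis using ideal_smult_empty by auto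
qed




lemma (in cring) alg1: "x \<in> carrier R \<Longrightarrow> y \<in> carrier R \<Longrightarrow> \<one> \<ominus> (\<one> \<ominus> x) \<otimes> y = (\<one> \<ominus> y) \<oplus> x \<otimes> y"
  by algebra

lemma (in cring) alg2: "x \<in> carrier R \<Longrightarrow> y \<in> carrier R \<Longrightarrow> (\<one> \<ominus> x \<otimes> y) \<otimes> x = x \<ominus> x \<otimes> x \<otimes> y"
  by algebra

lemma (in cring) one_minus_finprod_in_ideal:
  assumes I: "ideal I R" and G: "finite G" and f: "\<And>a. a \<in> G \<Longrightarrow> f a \<in> I"
  shows "\<one> \<ominus> finprod R (\<lambda>a. \<one> \<ominus> f a) G \<in> I"
  using G f
proof (induction G rule: finite_induct)
  case empty
  have "\<one> \<ominus> \<one> = \<zero>" by algebra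
  then show ?case using additive_subgroup.zero_closed[OF ideal.axioms(1)[OF I]] by simp
next
  case (insert x F)
  have fc: "\<And>a. a \<in> insert x F \<Longrightarrow> f a \<in> carrier R" using insert(4) ideal.Icarr[OF I] by blast
  have uF: "(\<lambda>a. \<one> \<ominus> f a) \<in> F \<rightarrow> carrier R" using fc by auto
  let ?g = "finprod R (\<lambda>a. \<one> \<ominus> f a) F"
  have g: "?g \<in> carrier R" using uF by simp
  have fx: "f x \<in> carrier R" using fc by simp
  have eq: "finprod R (\<lambda>a. \<one> \<ominus> f a) (insert x F) = (\<one> \<ominus> f x) \<otimes> ?g"
    using finprod_insert[OF insert(1) insert(2)] uF fx by auto
  have "\<one> \<ominus> (\<one> \<ominus> f x) \<otimes> ?g = (\<one> \<ominus> ?g) \<oplus> f x \<otimes> ?g" using alg1[OF fx g] .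
  moreover have "\<one> \<ominus> ?g \<in> I" using insert by simp
  moreover have "f x \<otimes> ?g \<in> I" using ideal.I_r_closed[OF I] insert(4) g by simp
  ultimately show ?case using eq additive_subgroup.a_closed[OF ideal.axioms(1)[OF I]] by simp
qed

lemma (in module) genideal_to_gens:
  assumes G: "G \<subseteq> carrier R" and full: "ideal_smult R M (genideal R G) = carrier M"
  shows "ideal_smult R M G = carrier M"
proof -
  let ?J = "{x \<in> carrier R. \<forall>m\<in>carrier M. x \<odot>\<^bsub>M\<^esub> m \<in> ideal_smult R M G}"
  have sub: "submodule (ideal_smult R M G) R M" using ideal_smult_submodule[OF G] .
  have J: "ideal ?J R"
  proof (rule idealI)
    show "ring R" by (simp add: ring_axioms)
    show "subgroup ?J (add_monoid R)"
    proof (rule subgroup.intro)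
      show "?J \<subseteq> carrier (add_monoid R)" by auto
      show "x \<otimes>\<^bsub>add_monoid R\<^esub> y \<in> ?J" if "x \<in> ?J" "y \<in> ?J" for x y
        using that submoduleE(5)[OF sub] by (auto simp: smult_l_distr)
      show "\<one>\<^bsub>add_monoid R\<^esub> \<in> ?J" using submodule_zero[OF sub] by auto
      show "inv\<^bsub>add_monoid R\<^esub> x \<in> ?J" if "x \<in> ?J" for x
        using that submoduleE(3)[OF sub] by (auto simp: smult_l_minus a_inv_def[symmetric])
    qed
    show "x \<otimes> a \<in> ?J" if "a \<in> ?J" "x \<in> carrier R" for a x
      using that submoduleE(4)[OF sub] by (auto simp: smult_assoc1)
    show "a \<otimes> x \<in> ?J" if "a \<in> ?J" "x \<in> carrier R" for a x
      using that submoduleE(4)[OF sub] by (auto simp: smult_assoc1 m_comm)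
  qed
  have "G \<subseteq> ?J" using G ideal_smult_gen by auto
  then have gj: "genideal R G \<subseteq> ?J" using genideal_minimal[OF J] by blast
  have "ideal_smult R M (genideal R G) \<subseteq> ideal_smult R M G"
    by (rule ideal_smult_min[OF sub]) (use gj in auto)
  then show ?thesis using full ideal_smult_sub[OF G] by auto
qed

lemma (in cring) idem_from_pireg:
  assumes a: "a \<in> carrier R" and b: "b \<in> carrier R" and e: "a [^] (p::nat) = a [^] Suc p \<otimes> b"
  shows "(a \<otimes> b) [^] p \<otimes> (a \<otimes> b) [^] p = (a \<otimes> b) [^] p"
    and "(\<one> \<ominus> (a \<otimes> b) [^] p) \<otimes> a [^] p = \<zero>"
proof -
  have k: "a [^] p = a [^] (p + k) \<otimes> b [^] k" for k
  proof (induction k)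
    case 0 then show ?case using a by simp
  next
    case (Suc k)
    have "a [^] (p + Suc k) \<otimes> b [^] Suc k = (a [^] Suc p \<otimes> b) \<otimes> (a [^] k \<otimes> b [^] k)"
    proof -
      have "a [^] (p + Suc k) = a [^] (Suc p + k)" by simp
      also have "\<dots> = a [^] Suc p \<otimes> a [^] k" using a by (simp only: nat_pow_mult)
      finally have "a [^] (p + Suc k) = a [^] Suc p \<otimes> a [^] k" .
      moreover have "b [^] Suc k = b [^] k \<otimes> b" using b by simp
      ultimately show ?thesis using a b by (simp add: m_ac)
    qed
    also have "\<dots> = a [^] p \<otimes> (a [^] k \<otimes> b [^] k)" using e by simp
    also have "\<dots> = a [^] (p + k) \<otimes> b [^] k" using a b by (simp add: m_assoc[symmetric] nat_pow_mult)
    finally show ?case using Suc by simp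
  qed
  have ab: "(a \<otimes> b) [^] p = a [^] p \<otimes> b [^] p" using a b by (simp add: nat_pow_distrib)
  have key: "a [^] p = a [^] p \<otimes> a [^] p \<otimes> b [^] p"
  proof -
    have e1: "a [^] (p+p) = a [^] p \<otimes> a [^] p" by (simp only: nat_pow_mult[OF a])
    show ?thesis using k[of p] unfolding e1 .
  qed
  show "(a \<otimes> b) [^] p \<otimes> (a \<otimes> b) [^] p = (a \<otimes> b) [^] p"
  proof -
    have "(a \<otimes> b) [^] p \<otimes> (a \<otimes> b) [^] p = (a [^] p \<otimes> a [^] p \<otimes> b [^] p) \<otimes> b [^] p"
      using ab a b by (simp add: m_ac)
    also have "\<dots> = (a \<otimes> b) [^] p" using key ab by simp
    finally show ?thesis .
  qed
  show "(\<one> \<ominus> (a \<otimes> b) [^] p) \<otimes> a [^] p = \<zero>"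
  proof -
    have "(\<one> \<ominus> (a \<otimes> b) [^] p) \<otimes> a [^] p = a [^] p \<ominus> a [^] p \<otimes> a [^] p \<otimes> b [^] p"
      unfolding ab using alg2[of "a [^] p" "b [^] p"] a b by simp
    also have "\<dots> = a [^] p \<ominus> a [^] p" using key[symmetric] a by simp
    also have "\<dots> = \<zero>" using a by (simp add: a_minus_def r_neg)
    finally show ?thesis .
  qed
qed




definition pireg :: "('a, 'c) ring_scheme \<Rightarrow> bool" where
  "pireg R \<longleftrightarrow> (\<forall>a\<in>carrier R. \<exists>p b. b \<in> carrier R \<and> a [^]\<^bsub>R\<^esub> (p::nat) = a [^]\<^bsub>R\<^esub> Suc p \<otimes>\<^bsub>R\<^esub> b)"

lemma (in module) core:
  assumes prg: "pireg R" and faith: "faithful_mod R M"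
    and G: "finite G" "G \<subseteq> carrier R" and prp: "genideal R G \<noteq> carrier R"
  shows "ideal_smult R M (genideal R G) \<noteq> carrier M"
proof
  assume full: "ideal_smult R M (genideal R G) = carrier M"
  have GM: "ideal_smult R M G = carrier M" by (rule genideal_to_gens[OF G(2) full])
  let ?I = "genideal R G"
  have I: "ideal ?I R" using genideal_ideal[OF G(2)] .
  have "\<forall>a\<in>G. \<exists>pb. snd pb \<in> carrier R \<and> a [^] Suc (fst pb) = a [^] Suc (Suc (fst pb)) \<otimes> snd pb"
  proof
    fix a assume aG: "a \<in> G"
    then have a: "a \<in> carrier R" using G by auto
    obtain p b where b: "b \<in> carrier R" and e: "a [^] (p::nat) = a [^] Suc p \<otimes> b"
      using prg a unfolding pireg_def by blast
    have "a [^] Suc p = a [^] p \<otimes> a" by simp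
    also have "\<dots> = a [^] Suc p \<otimes> b \<otimes> a" using e by simp
    also have "\<dots> = (a [^] Suc p \<otimes> a) \<otimes> b" using a b by (simp add: m_ac)
    also have "\<dots> = a [^] Suc (Suc p) \<otimes> b" by simp
    finally show "\<exists>pb. snd pb \<in> carrier R \<and> a [^] Suc (fst pb) = a [^] Suc (Suc (fst pb)) \<otimes> snd pb"
      using b by (intro exI[of _ "(p, b)"]) simp
  qed
  then obtain pb where pb: "\<And>a. a \<in> G \<Longrightarrow> snd (pb a) \<in> carrier R \<and> a [^] Suc (fst (pb a)) = a [^] Suc (Suc (fst (pb a))) \<otimes> snd (pb a)"
    by metis
  define p where "p a = Suc (fst (pb a))" for a
  define b where "b a = snd (pb a)" for a
  define f where "f a = (a \<otimes> b a) [^] p a" for a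
  have bc: "\<And>a. a \<in> G \<Longrightarrow> b a \<in> carrier R" using pb b_def by auto
  have ac: "\<And>a. a \<in> G \<Longrightarrow> a \<in> carrier R" using G by auto
  have pe: "\<And>a. a \<in> G \<Longrightarrow> a [^] p a = a [^] Suc (p a) \<otimes> b a" using pb p_def b_def by auto
  have fc: "\<And>a. a \<in> G \<Longrightarrow> f a \<in> carrier R" using bc ac f_def by simp
  have fidem: "\<And>a. a \<in> G \<Longrightarrow> f a \<otimes> f a = f a" using idem_from_pireg(1)[OF ac bc pe] f_def by simp
  have fnil: "\<And>a. a \<in> G \<Longrightarrow> (\<one> \<ominus> f a) \<otimes> a [^] p a = \<zero>" using idem_from_pireg(2)[OF ac bc pe] f_def by simp
  have fI: "f a \<in> ?I" if aG: "a \<in> G" for a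
  proof -
    have "a \<in> ?I" using genideal_self[OF G(2)] aG by auto
    then have x: "a \<otimes> b a \<in> ?I" using ideal.I_r_closed[OF I] bc[OF aG] by simp
    have "f a = (a \<otimes> b a) [^] fst (pb a) \<otimes> (a \<otimes> b a)" unfolding f_def p_def by simp
    then show ?thesis using ideal.I_l_closed[OF I x] ac[OF aG] bc[OF aG] by simp
  qed
  let ?g = "finprod R (\<lambda>a. \<one> \<ominus> f a) G"
  have gc: "?g \<in> carrier R" using fc by (auto intro: finprod_closed)
  have "\<forall>m\<in>carrier M. ?g \<odot>\<^bsub>M\<^esub> m = \<zero>\<^bsub>M\<^esub>"
    using main_module[OF G GM fc fidem fnil] by blast
  then have g0: "?g = \<zero>" using faith gc unfolding faithful_mod_def by blast
  have "\<one> \<ominus> ?g \<in> ?I" by (rule one_minus_finprod_in_ideal[OF I G(1) fI])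
  then have "\<one> \<in> ?I" using g0 by (simp add: a_minus_def)
  then show False using ideal.one_imp_carrier[OF I] prp by simp
qed




lemma (in cring) alg3: "a \<in> carrier R \<Longrightarrow> b \<in> carrier R \<Longrightarrow> c \<in> carrier R \<Longrightarrow>
  (\<one> \<ominus> a \<otimes> b) \<otimes> (\<one> \<ominus> a \<otimes> c) = \<one> \<ominus> a \<otimes> (b \<oplus> c \<ominus> a \<otimes> b \<otimes> c)"
  by algebra

lemma (in cring) alg4: "p1 \<in> carrier R \<Longrightarrow> p2 \<in> carrier R \<Longrightarrow> r1 \<in> carrier R \<Longrightarrow> r2 \<in> carrier R \<Longrightarrow> x \<in> carrier R \<Longrightarrow> y \<in> carrier R \<Longrightarrow>
  (p1 \<oplus> r1 \<otimes> x) \<otimes> (p2 \<oplus> r2 \<otimes> y) = p1 \<otimes> (p2 \<oplus> r2 \<otimes> y) \<oplus> (r1 \<otimes> x \<otimes> p2 \<oplus> (r1 \<otimes> r2) \<otimes> (x \<otimes> y))"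
  by algebra

lemma (in cring) alg5: "p \<in> carrier R \<Longrightarrow> r \<in> carrier R \<Longrightarrow> a \<in> carrier R \<Longrightarrow> \<one> = p \<oplus> r \<otimes> a \<Longrightarrow> p = \<one> \<ominus> a \<otimes> r"
  by (metis a_minus_def add.inv_solve_right m_comm m_closed one_closed)

lemma (in cring) alg6: "a \<in> carrier R \<Longrightarrow> b \<in> carrier R \<Longrightarrow> a [^] (n::nat) \<otimes> (\<one> \<ominus> a \<otimes> b) = a [^] n \<ominus> a [^] Suc n \<otimes> b"
proof -
  assume a: "a \<in> carrier R" and b: "b \<in> carrier R"
  have "a [^] n \<otimes> (\<one> \<ominus> a \<otimes> b) = a [^] n \<ominus> (a [^] n \<otimes> a) \<otimes> b"
    using a b by (simp add: m_assoc r_minus r_distr a_minus_def)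
  then show ?thesis by simp
qed

lemma (in cring) ideal_add_elem:
  assumes P: "ideal P R" and x: "x \<in> carrier R"
  shows "ideal (P <+> PIdl x) R" and "P \<subseteq> P <+> PIdl x" and "x \<in> P <+> PIdl x"
    and "\<And>s. s \<in> P <+> PIdl x \<Longrightarrow> \<exists>p r. p \<in> P \<and> r \<in> carrier R \<and> s = p \<oplus> r \<otimes> x"
proof -
  show "ideal (P <+> PIdl x) R" by (rule add_ideals[OF P cgenideal_ideal[OF x]])
  have Pc: "P \<subseteq> carrier R" using ideal.Icarr[OF P] by blast
  show "P \<subseteq> P <+> PIdl x"
  proof
    fix p assume p: "p \<in> P"
    have "p = p \<oplus> \<zero> \<otimes> x" using p Pc x by auto
    then show "p \<in> P <+> PIdl x" unfolding set_add_def' cgenideal_def using p by blast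
  qed
  have "x = \<zero> \<oplus> \<one> \<otimes> x" using x by simp
  moreover have "\<zero> \<in> P" using additive_subgroup.zero_closed[OF ideal.axioms(1)[OF P]] by simp
  ultimately show "x \<in> P <+> PIdl x" unfolding set_add_def' cgenideal_def by blast
  show "\<And>s. s \<in> P <+> PIdl x \<Longrightarrow> \<exists>p r. p \<in> P \<and> r \<in> carrier R \<and> s = p \<oplus> r \<otimes> x"
    unfolding set_add_def' cgenideal_def by blast
qed

lemma (in cring) chain_union_ideal:
  assumes C: "C \<noteq> {}" "\<And>J. J \<in> C \<Longrightarrow> ideal J R" "\<And>I J. I \<in> C \<Longrightarrow> J \<in> C \<Longrightarrow> I \<subseteq> J \<or> J \<subseteq> I"
  shows "ideal (\<Union>C) R"
proof (rule idealI)
  show "ring R" by (simp add: ring_axioms)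
  show "subgroup (\<Union>C) (add_monoid R)"
  proof (rule subgroup.intro)
    show "\<Union>C \<subseteq> carrier (add_monoid R)" using C(2) ideal.Icarr by fastforce
    show "x \<otimes>\<^bsub>add_monoid R\<^esub> y \<in> \<Union>C" if xy: "x \<in> \<Union>C" "y \<in> \<Union>C" for x y
    proof -
      obtain I J where I: "I \<in> C" "x \<in> I" and J: "J \<in> C" "y \<in> J" using xy by blast
      show ?thesis
      proof (cases "I \<subseteq> J")
        case True
        then show ?thesis using J I additive_subgroup.a_closed[OF ideal.axioms(1)[OF C(2)[OF J(1)]]] by auto
      next
        case False
        then have "J \<subseteq> I" using C(3)[OF I(1) J(1)] by blast
        then show ?thesis using J I additive_subgroup.a_closed[OF ideal.axioms(1)[OF C(2)[OF I(1)]]] by auto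
      qed
    qed
    obtain J where J: "J \<in> C" using C(1) by blast
    show "\<one>\<^bsub>add_monoid R\<^esub> \<in> \<Union>C"
      using J additive_subgroup.zero_closed[OF ideal.axioms(1)[OF C(2)[OF J]]] by auto
    show "inv\<^bsub>add_monoid R\<^esub> x \<in> \<Union>C" if "x \<in> \<Union>C" for x
      using that additive_subgroup.a_inv_closed[OF ideal.axioms(1)[OF C(2)]] by (fastforce simp: a_inv_def)
  qed
  show "x \<otimes> a \<in> \<Union>C" if "a \<in> \<Union>C" "x \<in> carrier R" for a x
    using that ideal.I_l_closed[OF C(2)] by blast
  show "a \<otimes> x \<in> \<Union>C" if "a \<in> \<Union>C" "x \<in> carrier R" for a x
    using that ideal.I_r_closed[OF C(2)] by blast
qed




lemma (in cring) alg7: "x \<in> carrier R \<Longrightarrow> y \<in> carrier R \<Longrightarrow> \<zero> = x \<ominus> y \<Longrightarrow> x = y"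
proof -
  assume x: "x \<in> carrier R" and y: "y \<in> carrier R" and e: "\<zero> = x \<ominus> y"
  have 1: "(x \<ominus> y) \<oplus> y = x" using x y by algebra
  have "(x \<ominus> y) \<oplus> y = y" using e[symmetric] y by simp
  then show "x = y" using 1 by simp
qed

lemma (in cring) alg8: "x \<in> carrier R \<Longrightarrow> y \<in> carrier R \<Longrightarrow> u \<in> carrier R \<Longrightarrow> v \<in> carrier R \<Longrightarrow> (x \<otimes> u) \<otimes> (y \<otimes> v) = (x \<otimes> y) \<otimes> (u \<otimes> v)"
  by (simp add: m_ac)

lemma (in cring) Smult_lemma:
  assumes a: "a \<in> carrier R" and b: "b \<in> carrier R" and c: "c \<in> carrier R"
  shows "(a [^] (n::nat) \<otimes> (\<one> \<ominus> a \<otimes> b)) \<otimes> (a [^] (m::nat) \<otimes> (\<one> \<ominus> a \<otimes> c)) = a [^] (n + m) \<otimes> (\<one> \<ominus> a \<otimes> (b \<oplus> c \<ominus> a \<otimes> b \<otimes> c))"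
proof -
  have "(a [^] (n::nat) \<otimes> (\<one> \<ominus> a \<otimes> b)) \<otimes> (a [^] (m::nat) \<otimes> (\<one> \<ominus> a \<otimes> c)) = (a [^] n \<otimes> a [^] m) \<otimes> ((\<one> \<ominus> a \<otimes> b) \<otimes> (\<one> \<ominus> a \<otimes> c))"
    by (rule alg8) (use a b c in auto)
  also have "\<dots> = a [^] (n + m) \<otimes> (\<one> \<ominus> a \<otimes> (b \<oplus> c \<ominus> a \<otimes> b \<otimes> c))"
    unfolding alg3[OF a b c] nat_pow_mult[OF a] ..
  finally show ?thesis .
qed

lemma (in cring) Smult_set:
  assumes a: "a \<in> carrier R"
    and s: "s \<in> {a [^] (n::nat) \<otimes> (\<one> \<ominus> a \<otimes> b) | n b. b \<in> carrier R}"
    and t: "t \<in> {a [^] (n::nat) \<otimes> (\<one> \<ominus> a \<otimes> b) | n b. b \<in> carrier R}"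
  shows "s \<otimes> t \<in> {a [^] (n::nat) \<otimes> (\<one> \<ominus> a \<otimes> b) | n b. b \<in> carrier R}"
proof -
  from s obtain n b where b: "b \<in> carrier R" and s': "s = a [^] (n::nat) \<otimes> (\<one> \<ominus> a \<otimes> b)" by blast
  from t obtain m c where c: "c \<in> carrier R" and t': "t = a [^] (m::nat) \<otimes> (\<one> \<ominus> a \<otimes> c)" by blast
  have st: "s \<otimes> t = a [^] (n + m) \<otimes> (\<one> \<ominus> a \<otimes> (b \<oplus> c \<ominus> a \<otimes> b \<otimes> c))"
    unfolding s' t' by (rule Smult_lemma[OF a b c])
  have bc': "b \<oplus> c \<ominus> a \<otimes> b \<otimes> c \<in> carrier R" using a b c by simp
  show ?thesis using st bc' by blast
qed

lemma (in cring) zero_dim_pireg: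
  assumes kd: "krull_dim_zero R"
  shows "pireg R"
  unfolding pireg_def
proof
  fix a assume a: "a \<in> carrier R"
  show "\<exists>p b. b \<in> carrier R \<and> a [^] (p::nat) = a [^] Suc p \<otimes> b"
  proof (rule ccontr)
    assume nex: "\<not> ?thesis"
    define S where "S = {a [^] (n::nat) \<otimes> (\<one> \<ominus> a \<otimes> b) | n b. b \<in> carrier R}"
    have S0: "\<zero> \<notin> S"
    proof
      assume "\<zero> \<in> S"
      then obtain n b where b: "b \<in> carrier R" and z: "\<zero> = a [^] (n::nat) \<otimes> (\<one> \<ominus> a \<otimes> b)" unfolding S_def by blast
      then have "\<zero> = a [^] n \<ominus> a [^] Suc n \<otimes> b" using alg6[OF a b] by simp
      then have "a [^] n = a [^] Suc n \<otimes> b"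
        by (rule alg7[rotated 2]) (use a b in auto)
      then show False using nex b by auto
    qed
    have Smult: "s \<otimes> t \<in> S" if "s \<in> S" "t \<in> S" for s t
      using that unfolding S_def by (rule Smult_set[OF a])
    have Sc: "S \<subseteq> carrier R" unfolding S_def using a by auto
    have oneS: "\<one> \<in> S" unfolding S_def using a
      by (intro CollectI exI[of _ 0] exI[of _ \<zero>]) (simp add: a_minus_def)
    have aS: "a \<in> S" unfolding S_def using a
      by (intro CollectI exI[of _ 1] exI[of _ \<zero>]) (simp add: a_minus_def)
    define A where "A = {J. ideal J R \<and> J \<inter> S = {}}"
    have "{\<zero>} \<in> A" unfolding A_def using zeroideal S0 by auto
    then have Ane: "A \<noteq> {}" by blast
    have "\<exists>P\<in>A. \<forall>X\<in>A. P \<subseteq> X \<longrightarrow> X = P"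
    proof (rule subset_Zorn_nonempty[OF Ane])
      fix C assume C: "C \<noteq> {}" "subset.chain A C"
      have CA: "C \<subseteq> A" and ch: "\<And>I J. I \<in> C \<Longrightarrow> J \<in> C \<Longrightarrow> I \<subseteq> J \<or> J \<subseteq> I"
        using C(2) unfolding subset.chain_def by blast+
      have "ideal (\<Union>C) R" using chain_union_ideal[OF C(1) _ ch] CA unfolding A_def by blast
      moreover have "\<Union>C \<inter> S = {}" using CA unfolding A_def by blast
      ultimately show "\<Union>C \<in> A" unfolding A_def by blast
    qed
    then obtain P where PA: "P \<in> A" and Pmax: "\<And>X. X \<in> A \<Longrightarrow> P \<subseteq> X \<Longrightarrow> X = P" by blast
    have P: "ideal P R" and PS: "P \<inter> S = {}" using PA unfolding A_def by auto
    have meet: "\<exists>p r. p \<in> P \<and> r \<in> carrier R \<and> p \<oplus> r \<otimes> x \<in> S" if x: "x \<in> carrier R" "x \<notin> P" for x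
    proof -
      note J = ideal_add_elem[OF P x(1)]
      have "P <+>\<^bsub>R\<^esub> PIdl x \<noteq> P" using J(3) x(2) by blast
      then have "P <+>\<^bsub>R\<^esub> PIdl x \<notin> A" using Pmax J(2) by blast
      then obtain s where "s \<in> P <+>\<^bsub>R\<^esub> PIdl x" "s \<in> S" unfolding A_def using J(1) by blast
      then show ?thesis using J(4) by blast
    qed
    have Pc: "P \<subseteq> carrier R" using ideal.Icarr[OF P] by blast
    have prime: "primeideal P R"
    proof (rule primeidealI[OF P is_cring])
      show "carrier R \<noteq> P" using oneS PS by auto
      fix x y assume x: "x \<in> carrier R" and y: "y \<in> carrier R" and xy: "x \<otimes> y \<in> P"
      show "x \<in> P \<or> y \<in> P"
      proof (rule ccontr)
        assume "\<not> (x \<in> P \<or> y \<in> P)"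
        then have nx: "x \<notin> P" and ny: "y \<notin> P" by auto
        obtain p1 r1 where p1: "p1 \<in> P" "r1 \<in> carrier R" "p1 \<oplus> r1 \<otimes> x \<in> S" using meet[OF x nx] by blast
        obtain p2 r2 where p2: "p2 \<in> P" "r2 \<in> carrier R" "p2 \<oplus> r2 \<otimes> y \<in> S" using meet[OF y ny] by blast
        have p1c: "p1 \<in> carrier R" and p2c: "p2 \<in> carrier R" using p1 p2 Pc by auto
        have "(p1 \<oplus> r1 \<otimes> x) \<otimes> (p2 \<oplus> r2 \<otimes> y) \<in> S" using Smult p1 p2 by blast
        moreover have "(p1 \<oplus> r1 \<otimes> x) \<otimes> (p2 \<oplus> r2 \<otimes> y) \<in> P"
        proof -
          have i1: "p1 \<otimes> (p2 \<oplus> r2 \<otimes> y) \<in> P" using ideal.I_r_closed[OF P p1(1)] p2c p2(2) y by simp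
          have i2: "r1 \<otimes> x \<otimes> p2 \<in> P" using ideal.I_l_closed[OF P p2(1)] p1(2) x by simp
          have i3: "(r1 \<otimes> r2) \<otimes> (x \<otimes> y) \<in> P" using ideal.I_l_closed[OF P xy] p1(2) p2(2) by simp
          have "r1 \<otimes> x \<otimes> p2 \<oplus> (r1 \<otimes> r2) \<otimes> (x \<otimes> y) \<in> P"
            using additive_subgroup.a_closed[OF ideal.axioms(1)[OF P] i2 i3] .
          then show ?thesis
            using additive_subgroup.a_closed[OF ideal.axioms(1)[OF P] i1] alg4[OF p1c p2c p1(2) p2(2) x y] by simp
        qed
        ultimately show False using PS by blast
      qed
    qed
    then have maxP: "maximalideal P R" using kd unfolding krull_dim_zero_def by blast
    have naP: "a \<notin> P" using aS PS by blast
    note J = ideal_add_elem[OF P a]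
    have "P <+>\<^bsub>R\<^esub> PIdl a = P \<or> P <+>\<^bsub>R\<^esub> PIdl a = carrier R"
      using maximalideal.I_maximal[OF maxP J(1) J(2)] ideal.Icarr[OF J(1)] by blast
    then have "P <+>\<^bsub>R\<^esub> PIdl a = carrier R" using J(3) naP by blast
    then obtain p r where pr: "p \<in> P" "r \<in> carrier R" "\<one> = p \<oplus> r \<otimes> a" using J(4)[of \<one>] by auto
    have "p = \<one> \<ominus> a \<otimes> r" using alg5[OF _ pr(2) a pr(3)] pr(1) Pc by blast
    then have "p = a [^] (0::nat) \<otimes> (\<one> \<ominus> a \<otimes> r)" using a pr(2) by simp
    then have "p \<in> S" unfolding S_def
      by (rule_tac CollectI, rule_tac exI[of _ 0], rule_tac exI[of _ r]) (simp add: pr(2))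
    then show False using pr(1) PS by blast
  qed
qed




lemma ring_hom_pow:
  assumes h: "h \<in> ring_hom R S" and x: "x \<in> carrier R" and R: "monoid R"
  shows "h (x [^]\<^bsub>R\<^esub> (n::nat)) = h x [^]\<^bsub>S\<^esub> n"
proof (induction n)
  case 0 then show ?case using ring_hom_one[OF h] by simp
next
  case (Suc n)
  have "x [^]\<^bsub>R\<^esub> n \<in> carrier R" using monoid.nat_pow_closed[OF R x] .
  then show ?case using Suc ring_hom_mult[OF h _ x] by simp
qed

lemma (in module) ann_ideal: "ideal (ann_mod R M) R"
proof (rule idealI)
  show "ring R" by (simp add: ring_axioms)
  show "subgroup (ann_mod R M) (add_monoid R)"
  proof (rule subgroup.intro)
    show "ann_mod R M \<subseteq> carrier (add_monoid R)" unfolding ann_mod_def by auto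
    show "x \<otimes>\<^bsub>add_monoid R\<^esub> y \<in> ann_mod R M" if "x \<in> ann_mod R M" "y \<in> ann_mod R M" for x y
      using that unfolding ann_mod_def by (auto simp: smult_l_distr)
    show "\<one>\<^bsub>add_monoid R\<^esub> \<in> ann_mod R M" unfolding ann_mod_def by auto
    show "inv\<^bsub>add_monoid R\<^esub> x \<in> ann_mod R M" if "x \<in> ann_mod R M" for x
      using that unfolding ann_mod_def by (auto simp: smult_l_minus a_inv_def[symmetric])
  qed
  show "x \<otimes> a \<in> ann_mod R M" if "a \<in> ann_mod R M" "x \<in> carrier R" for a x
    using that unfolding ann_mod_def by (auto simp: smult_assoc1)
  show "a \<otimes> x \<in> ann_mod R M" if "a \<in> ann_mod R M" "x \<in> carrier R" for a x
    using that unfolding ann_mod_def by (auto simp: smult_assoc1 m_comm)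
qed

lemma (in module) coset_smult:
  assumes a: "a \<in> carrier R" and r: "r \<in> ann_mod R M +> a" and m: "m \<in> carrier M"
  shows "r \<odot>\<^bsub>M\<^esub> m = a \<odot>\<^bsub>M\<^esub> m"
proof -
  obtain h where h: "h \<in> ann_mod R M" and rh: "r = h \<oplus> a" using r unfolding a_r_coset_def' by blast
  have hc: "h \<in> carrier R" and h0: "h \<odot>\<^bsub>M\<^esub> m = \<zero>\<^bsub>M\<^esub>" using h m unfolding ann_mod_def by auto
  show ?thesis using rh hc h0 a m by (simp add: smult_l_distr)
qed

lemma (in module) bar_smult:
  assumes a: "a \<in> carrier R" and m: "m \<in> carrier M"
  shows "(ann_mod R M +> a) \<odot>\<^bsub>quot_ann_module R M\<^esub> m = a \<odot>\<^bsub>M\<^esub> m"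
proof -
  have "\<zero> \<in> ann_mod R M" unfolding ann_mod_def by auto
  then have "a \<in> ann_mod R M +> a" unfolding a_r_coset_def' using a by force
  then have "(SOME r. r \<in> ann_mod R M +> a) \<in> ann_mod R M +> a" by (rule someI)
  then show ?thesis unfolding quot_ann_module_def using coset_smult[OF a _ m] by simp
qed

lemma (in module) quot_carrier:
  "c \<in> carrier (R Quot ann_mod R M) \<Longrightarrow> \<exists>a\<in>carrier R. c = ann_mod R M +> a"
  unfolding FactRing_def A_RCOSETS_def' by auto

lemma (in module) quot_module: "module (R Quot ann_mod R M) (quot_ann_module R M)"
proof -
  let ?A = "ann_mod R M" and ?Q = "R Quot ann_mod R M" and ?N = "quot_ann_module R M"
  interpret A: ideal ?A R by (rule ann_ideal)
  have hom: "(+>) ?A \<in> ring_hom R ?Q" by (rule A.rcos_ring_hom)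
  have cN: "carrier ?N = carrier M" unfolding quot_ann_module_def by simp
  have addN: "\<And>x y. x \<oplus>\<^bsub>?N\<^esub> y = x \<oplus>\<^bsub>M\<^esub> y" unfolding quot_ann_module_def by simp
  show ?thesis
  proof (rule moduleI)
    show "cring ?Q" by (rule A.quotient_is_cring[OF is_cring])
    show "abelian_group ?N"
    proof (rule abelian_groupI)
      show "\<And>x y. x \<in> carrier ?N \<Longrightarrow> y \<in> carrier ?N \<Longrightarrow> x \<oplus>\<^bsub>?N\<^esub> y \<in> carrier ?N"
        unfolding quot_ann_module_def by simp
      show "\<zero>\<^bsub>?N\<^esub> \<in> carrier ?N" unfolding quot_ann_module_def by simp
      show "\<And>x y z. x \<in> carrier ?N \<Longrightarrow> y \<in> carrier ?N \<Longrightarrow> z \<in> carrier ?N \<Longrightarrow> (x \<oplus>\<^bsub>?N\<^esub> y) \<oplus>\<^bsub>?N\<^esub> z = x \<oplus>\<^bsub>?N\<^esub> (y \<oplus>\<^bsub>?N\<^esub> z)"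
        unfolding quot_ann_module_def by (simp add: M.a_assoc)
      show "\<And>x y. x \<in> carrier ?N \<Longrightarrow> y \<in> carrier ?N \<Longrightarrow> x \<oplus>\<^bsub>?N\<^esub> y = y \<oplus>\<^bsub>?N\<^esub> x"
        unfolding quot_ann_module_def by (simp add: M.a_comm)
      show "\<And>x. x \<in> carrier ?N \<Longrightarrow> \<zero>\<^bsub>?N\<^esub> \<oplus>\<^bsub>?N\<^esub> x = x"
        unfolding quot_ann_module_def by simp
      show "\<And>x. x \<in> carrier ?N \<Longrightarrow> \<exists>y\<in>carrier ?N. y \<oplus>\<^bsub>?N\<^esub> x = \<zero>\<^bsub>?N\<^esub>"
        unfolding quot_ann_module_def using M.l_neg M.a_inv_closed by fastforce
    qed
    show "a \<odot>\<^bsub>?N\<^esub> x \<in> carrier ?N" if "a \<in> carrier ?Q" "x \<in> carrier ?N" for a x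
      using quot_carrier[OF that(1)] that(2) bar_smult cN by auto
    show "(a \<oplus>\<^bsub>?Q\<^esub> b) \<odot>\<^bsub>?N\<^esub> x = (a \<odot>\<^bsub>?N\<^esub> x) \<oplus>\<^bsub>?N\<^esub> (b \<odot>\<^bsub>?N\<^esub> x)"
      if "a \<in> carrier ?Q" "b \<in> carrier ?Q" "x \<in> carrier ?N" for a b x
    proof -
      note H = that
      obtain a' where a': "a' \<in> carrier R" "a = ?A +> a'" using quot_carrier[OF H(1)] by blast
      obtain b' where b': "b' \<in> carrier R" "b = ?A +> b'" using quot_carrier[OF H(2)] by blast
      have x: "x \<in> carrier M" using that(3) cN by simp
      have e: "a \<oplus>\<^bsub>?Q\<^esub> b = ?A +> (a' \<oplus> b')"
        unfolding a'(2) b'(2) by (rule ring_hom_add[OF hom a'(1) b'(1), symmetric])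
      have "(a \<oplus>\<^bsub>?Q\<^esub> b) \<odot>\<^bsub>?N\<^esub> x = (a' \<oplus> b') \<odot>\<^bsub>M\<^esub> x"
        unfolding e by (rule bar_smult) (use a' b' x in auto)
      also have "\<dots> = (a' \<odot>\<^bsub>M\<^esub> x) \<oplus>\<^bsub>M\<^esub> (b' \<odot>\<^bsub>M\<^esub> x)" using a' b' x by (rule_tac smult_l_distr) auto
      also have "\<dots> = (a \<odot>\<^bsub>?N\<^esub> x) \<oplus>\<^bsub>?N\<^esub> (b \<odot>\<^bsub>?N\<^esub> x)"
        unfolding a'(2) b'(2) bar_smult[OF a'(1) x] bar_smult[OF b'(1) x] by (simp only: addN)
      finally show ?thesis .
    qed
    show "a \<odot>\<^bsub>?N\<^esub> (x \<oplus>\<^bsub>?N\<^esub> y) = (a \<odot>\<^bsub>?N\<^esub> x) \<oplus>\<^bsub>?N\<^esub> (a \<odot>\<^bsub>?N\<^esub> y)"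
      if "a \<in> carrier ?Q" "x \<in> carrier ?N" "y \<in> carrier ?N" for a x y
    proof -
      note H = that
      obtain a' where a': "a' \<in> carrier R" "a = ?A +> a'" using quot_carrier[OF H(1)] by blast
      have x: "x \<in> carrier M" and y: "y \<in> carrier M" using that(2,3) cN by auto
      have xy: "x \<oplus>\<^bsub>?N\<^esub> y = x \<oplus>\<^bsub>M\<^esub> y" unfolding quot_ann_module_def by simp
      have "a \<odot>\<^bsub>?N\<^esub> (x \<oplus>\<^bsub>?N\<^esub> y) = a' \<odot>\<^bsub>M\<^esub> (x \<oplus>\<^bsub>M\<^esub> y)"
        unfolding xy a'(2) by (rule bar_smult) (use a' x y in auto)
      also have "\<dots> = (a' \<odot>\<^bsub>M\<^esub> x) \<oplus>\<^bsub>M\<^esub> (a' \<odot>\<^bsub>M\<^esub> y)" using a' x y by (rule_tac smult_r_distr) auto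
      also have "\<dots> = (a \<odot>\<^bsub>?N\<^esub> x) \<oplus>\<^bsub>?N\<^esub> (a \<odot>\<^bsub>?N\<^esub> y)"
        unfolding a'(2) bar_smult[OF a'(1) x] bar_smult[OF a'(1) y] by (simp only: addN)
      finally show ?thesis .
    qed
    show "(a \<otimes>\<^bsub>?Q\<^esub> b) \<odot>\<^bsub>?N\<^esub> x = a \<odot>\<^bsub>?N\<^esub> (b \<odot>\<^bsub>?N\<^esub> x)"
      if "a \<in> carrier ?Q" "b \<in> carrier ?Q" "x \<in> carrier ?N" for a b x
    proof -
      note H = that
      obtain a' where a': "a' \<in> carrier R" "a = ?A +> a'" using quot_carrier[OF H(1)] by blast
      obtain b' where b': "b' \<in> carrier R" "b = ?A +> b'" using quot_carrier[OF H(2)] by blast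
      have x: "x \<in> carrier M" using that(3) cN by simp
      have e: "a \<otimes>\<^bsub>?Q\<^esub> b = ?A +> (a' \<otimes> b')"
        unfolding a'(2) b'(2) by (rule ring_hom_mult[OF hom a'(1) b'(1), symmetric])
      have "(a \<otimes>\<^bsub>?Q\<^esub> b) \<odot>\<^bsub>?N\<^esub> x = (a' \<otimes> b') \<odot>\<^bsub>M\<^esub> x"
        unfolding e by (rule bar_smult) (use a' b' x in auto)
      also have "\<dots> = a' \<odot>\<^bsub>M\<^esub> (b' \<odot>\<^bsub>M\<^esub> x)" using a' b' x by (rule_tac smult_assoc1) auto
      also have "\<dots> = a \<odot>\<^bsub>?N\<^esub> (b \<odot>\<^bsub>?N\<^esub> x)"
        unfolding a'(2) b'(2) bar_smult[OF b'(1) x] using bar_smult[OF a'(1) smult_closed[OF b'(1) x]] by simp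
      finally show ?thesis .
    qed
    show "\<one>\<^bsub>?Q\<^esub> \<odot>\<^bsub>?N\<^esub> x = x" if "x \<in> carrier ?N" for x
    proof -
      have o: "\<one>\<^bsub>?Q\<^esub> = ?A +> \<one>" unfolding FactRing_def by simp
      have x: "x \<in> carrier M" using that cN by simp
      show ?thesis unfolding o bar_smult[OF one_closed x] using x by simp
    qed
  qed
qed




lemma (in module) quot_faithful: "faithful_mod (R Quot ann_mod R M) (quot_ann_module R M)"
  unfolding faithful_mod_def
proof (intro ballI impI)
  let ?A = "ann_mod R M" and ?Q = "R Quot ann_mod R M" and ?N = "quot_ann_module R M"
  fix c assume c: "c \<in> carrier ?Q" and z: "\<forall>m\<in>carrier ?N. c \<odot>\<^bsub>?N\<^esub> m = \<zero>\<^bsub>?N\<^esub>"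
  obtain a where a: "a \<in> carrier R" "c = ?A +> a" using quot_carrier[OF c] by blast
  have cN: "carrier ?N = carrier M" and zN: "\<zero>\<^bsub>?N\<^esub> = \<zero>\<^bsub>M\<^esub>" unfolding quot_ann_module_def by simp_all
  have "\<forall>m\<in>carrier M. a \<odot>\<^bsub>M\<^esub> m = \<zero>\<^bsub>M\<^esub>"
  proof
    fix m assume m: "m \<in> carrier M"
    have "c \<odot>\<^bsub>?N\<^esub> m = \<zero>\<^bsub>M\<^esub>" using z m cN zN by simp
    then show "a \<odot>\<^bsub>M\<^esub> m = \<zero>\<^bsub>M\<^esub>" unfolding a(2) bar_smult[OF a(1) m] .
  qed
  then have "a \<in> ?A" unfolding ann_mod_def using a(1) by blast
  then have "?A +> a = ?A" using a_rcos_zero[OF ann_ideal] by simp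
  then show "c = \<zero>\<^bsub>?Q\<^esub>" using a(2) unfolding FactRing_def by simp
qed

lemma (in module) quot_pireg: "pireg R \<Longrightarrow> pireg (R Quot ann_mod R M)"
  unfolding pireg_def
proof (intro ballI)
  let ?A = "ann_mod R M" and ?Q = "R Quot ann_mod R M"
  assume pr: "\<forall>a\<in>carrier R. \<exists>p b. b \<in> carrier R \<and> a [^] (p::nat) = a [^] Suc p \<otimes> b"
  fix c assume c: "c \<in> carrier ?Q"
  interpret A: ideal ?A R by (rule ann_ideal)
  have hom: "(+>) ?A \<in> ring_hom R ?Q" by (rule A.rcos_ring_hom)
  obtain a where a: "a \<in> carrier R" "c = ?A +> a" using quot_carrier[OF c] by blast
  obtain p b where b: "b \<in> carrier R" and e: "a [^] (p::nat) = a [^] Suc p \<otimes> b" using pr a(1) by blast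
  have "c [^]\<^bsub>?Q\<^esub> p = ?A +> (a [^] p)" unfolding a(2) using ring_hom_pow[OF hom a(1)] monoid_axioms by simp
  also have "\<dots> = ?A +> (a [^] Suc p \<otimes> b)" using e by simp
  also have "\<dots> = (?A +> (a [^] Suc p)) \<otimes>\<^bsub>?Q\<^esub> (?A +> b)" using ring_hom_mult[OF hom _ b] a(1) by simp
  also have "\<dots> = c [^]\<^bsub>?Q\<^esub> Suc p \<otimes>\<^bsub>?Q\<^esub> (?A +> b)" unfolding a(2) by (simp only: ring_hom_pow[OF hom a(1) monoid_axioms])
  finally show "\<exists>p b. b \<in> carrier ?Q \<and> c [^]\<^bsub>?Q\<^esub> (p::nat) = c [^]\<^bsub>?Q\<^esub> Suc p \<otimes>\<^bsub>?Q\<^esub> b"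
    using ring_hom_closed[OF hom b] by blast
qed

theorem proposition3p9:
  fixes R :: "('a, 'c) ring_scheme"
  assumes "cring R"
    and "krull_dim_zero R"
  shows "(\<forall>M :: ('a, 'b) module. module R M \<and> faithful_mod R M \<longrightarrow> dual_proper_strong_A R M)
       \<and> (\<forall>M :: ('a, 'b) module. module R M \<longrightarrow>
            dual_proper_strong_A (R Quot (ann_mod R M)) (quot_ann_module R M))"
proof (intro conjI allI impI)
  have pr: "pireg R" using cring.zero_dim_pireg[OF assms(1,2)] .
  fix M :: "('a, 'b) module"
  assume h: "module R M \<and> faithful_mod R M"
  then interpret module R M by simp
  show "dual_proper_strong_A R M" unfolding dual_proper_strong_A_def
  proof (intro allI impI)
    fix S assume S: "finite S \<and> S \<noteq> {} \<and> S \<subseteq> W_mod R M \<and> genideal R S \<noteq> carrier R"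
    have "S \<subseteq> carrier R" using S unfolding W_mod_def by blast
    then show "ideal_smult R M (genideal R S) \<noteq> carrier M" using core[OF pr] h S by blast
  qed
next
  have pr: "pireg R" using cring.zero_dim_pireg[OF assms(1,2)] .
  fix M :: "('a, 'b) module"
  assume "module R M"
  then interpret module R M by simp
  interpret N: module "R Quot ann_mod R M" "quot_ann_module R M" by (rule quot_module)
  show "dual_proper_strong_A (R Quot (ann_mod R M)) (quot_ann_module R M)" unfolding dual_proper_strong_A_def
  proof (intro allI impI)
    fix S assume S: "finite S \<and> S \<noteq> {} \<and> S \<subseteq> W_mod (R Quot (ann_mod R M)) (quot_ann_module R M) \<and> genideal (R Quot (ann_mod R M)) S \<noteq> carrier (R Quot (ann_mod R M))"
    have "S \<subseteq> carrier (R Quot (ann_mod R M))" using S unfolding W_mod_def by blast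
    then show "ideal_smult (R Quot (ann_mod R M)) (quot_ann_module R M) (genideal (R Quot (ann_mod R M)) S) \<noteq> carrier (quot_ann_module R M)"
      using N.core[OF quot_pireg[OF pr] quot_faithful] S by blast
  qed
qed


end
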